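(* Let $k,\ell\geq t+2$ and $n\geq L(\max\{k,\ell\},t)$. If $\mathcal{F}\subseteq\Pi(n,k)$ and $\mathcal{G}\subseteq\Pi(n,\ell)$ are nonempty cross $t$-intersecting families, then $$|\mathcal{F}||\mathcal{G}|\leq g(\tau_t(\mathcal{G}),k,\ell,t,n)\,g(\tau_t(\mathcal{F}),\ell,k,t,n).$$
   Context: $[n]=\{1,\ldots,n\}$. A partition is a set of pairwise disjoint nonempty sets (blocks). $\Pi(n,k)$ is the set of partitions of $[n]$ into $k$ blocks and $S(n,k)=|\Pi(n,k)|$. $\mathcal{F},\mathcal{G}$ are cross $t$-intersecting if every $F\in\mathcal{F}$ and $G\in\mathcal{G}$ share at least $t$ blocks. A $t$-cover of a family $\mathcal{P}$ of partitions is a partition sharing at least $t$ blocks with each member of $\mathcal{P}$; $\tau_t(\mathcal{P})$ is the minimal number of blocks of a $t$-cover (so here $t\leq\tau_t(\mathcal{G})\leq k$, $t\leq\tau_t(\mathcal{F})\leq\ell$). $L(k,t):=(t+1)+(k-t+1)\log_2((t+1)(k-t+1))$. For $t\leq m\leq k$: $f(m,k,\ell,t,n)=(\ell-t+1)^{m-t}\binom{m}{t}S(n-m,k-m)$ if $m\leq k-1$ and $f(k,k,\ell,t,n)=(\ell-t+1)^{k-t}\binom{k}{t}$; $g(m,k,\ell,t,n)=\max\{f(m,k,\ell,t,n),f(k,k,\ell,t,n)\}$. *)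

theory Defs
  imports Complex_Main "HOL-Library.Disjoint_Sets"
begin

definition is_partition :: "nat set set \<Rightarrow> bool" where
  "is_partition P \<longleftrightarrow> disjoint P \<and> {} \<notin> P \<and> finite P"

definition Pi_nk :: "nat \<Rightarrow> nat \<Rightarrow> nat set set set" where
  "Pi_nk n k = {P. partition_on {1..n} P \<and> card P = k}"

definition S2 :: "nat \<Rightarrow> nat \<Rightarrow> nat" where
  "S2 n k = card (Pi_nk n k)"

definition cross_t_intersecting :: "nat \<Rightarrow> nat set set set \<Rightarrow> nat set set set \<Rightarrow> bool" where
  "cross_t_intersecting t F G \<longleftrightarrow> (\<forall>A\<in>F. \<forall>B\<in>G. card (A \<inter> B) \<ge> t)"

definition is_t_cover :: "nat \<Rightarrow> nat \<Rightarrow> nat set set set \<Rightarrow> nat set set \<Rightarrow> bool" where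
  "is_t_cover n t PP T \<longleftrightarrow> is_partition T \<and> \<Union>T \<subseteq> {1..n} \<and>
     (\<forall>P\<in>PP. card (T \<inter> P) \<ge> t)"

definition tau :: "nat \<Rightarrow> nat \<Rightarrow> nat set set set \<Rightarrow> nat" where
  "tau n t PP = (LEAST m. \<exists>T. is_t_cover n t PP T \<and> card T = m)"

definition L :: "nat \<Rightarrow> nat \<Rightarrow> real" where
  "L k t = real (t + 1) + real (k - t + 1) * log 2 (real ((t + 1) * (k - t + 1)))"

definition f_bound :: "nat \<Rightarrow> nat \<Rightarrow> nat \<Rightarrow> nat \<Rightarrow> nat \<Rightarrow> nat" where
  "f_bound m k l t n =
     (if m \<le> k - 1 then (l - t + 1) ^ (m - t) * (m choose t) * S2 (n - m) (k - m)
      else (l - t + 1) ^ (k - t) * (k choose t))"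

definition g_bound :: "nat \<Rightarrow> nat \<Rightarrow> nat \<Rightarrow> nat \<Rightarrow> nat \<Rightarrow> nat" where
  "g_bound m k l t n = max (f_bound m k l t n) (f_bound k k l t n)"

end

theory Submission
  imports Defs
begin


lemma parts_inj:
  fixes h :: "'a \<Rightarrow> 'b"
  assumes inj: "inj_on h A" and fin: "finite A"
  shows "card {Q. partition_on A Q \<and> card Q = K} \<le> card {Q. partition_on (h ` A) Q \<and> card Q = K}"
proof (rule card_inj_on_le[where f="\<lambda>Q. (`) h ` Q"])
  have i1: "inj_on ((`) h) (Pow A)" using inj by (rule inj_on_image_Pow)
  have "inj_on ((`) ((`) h)) (Pow (Pow A))" using i1 by (rule inj_on_image_Pow)
  moreover have "{Q. partition_on A Q \<and> card Q = K} \<subseteq> Pow (Pow A)"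
    by (auto simp: partition_on_def)
  ultimately show "inj_on (\<lambda>Q. (`) h ` Q) {Q. partition_on A Q \<and> card Q = K}"
    by (rule inj_on_subset)
  show "(\<lambda>Q. (`) h ` Q) ` {Q. partition_on A Q \<and> card Q = K} \<subseteq> {Q. partition_on (h ` A) Q \<and> card Q = K}"
  proof safe
    fix Q assume Q: "partition_on A Q" "K = card Q"
    have e: "(`) h ` Q - {{}} = (`) h ` Q" using partition_onD3[OF Q(1)] by auto
    show "partition_on (h ` A) ((`) h ` Q)" using partition_on_inj_image[OF Q(1) inj] e by simp
    have "Q \<subseteq> Pow A" using Q(1) by (auto simp: partition_on_def)
    then have "inj_on ((`) h) Q" using i1 inj_on_subset by blast
    then show "card ((`) h ` Q) = card Q" by (rule card_image)
  qed
  show "finite {Q. partition_on (h ` A) Q \<and> card Q = K}"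
    using finitely_many_partition_on[of "h ` A"] fin by (auto intro: finite_subset)
qed

lemma parts_sub:
  assumes AB: "A \<subseteq> B" and fin: "finite B" and x0: "x0 \<in> A"
  shows "card {Q. partition_on A Q \<and> card Q = K} \<le> card {Q. partition_on B Q \<and> card Q = K}"
proof -
  define phi where "phi = (\<lambda>C. if x0 \<in> C then C \<union> (B - A) else C)"
  have phiA: "phi C \<inter> A = C" if "C \<subseteq> A" for C using that by (auto simp: phi_def)
  have bk: "(\<lambda>C. C \<inter> A) ` (phi ` Q) = Q" if "partition_on A Q" for Q
  proof -
    have "\<forall>C\<in>Q. C \<subseteq> A" using that by (auto simp: partition_on_def)
    then show ?thesis using phiA by (force simp: image_image)
  qed
  show ?thesis
  proof (rule card_inj_on_le[where f="\<lambda>Q. phi ` Q"])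
    show "inj_on (\<lambda>Q. phi ` Q) {Q. partition_on A Q \<and> card Q = K}"
      by (rule inj_onI) (metis (no_types, lifting) bk mem_Collect_eq)
    show "(\<lambda>Q. phi ` Q) ` {Q. partition_on A Q \<and> card Q = K} \<subseteq> {Q. partition_on B Q \<and> card Q = K}"
    proof safe
      fix Q assume Q: "partition_on A Q" "K = card Q"
      have sub: "\<forall>C\<in>Q. C \<subseteq> A" using Q(1) by (auto simp: partition_on_def)
      have ne: "{} \<notin> Q" using Q(1) by (auto simp: partition_on_def)
      have dj: "\<And>C1 C2. C1 \<in> Q \<Longrightarrow> C2 \<in> Q \<Longrightarrow> C1 \<noteq> C2 \<Longrightarrow> C1 \<inter> C2 = {}"
        using partition_onD2[OF Q(1)] by (auto simp: disjoint_def)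
      have un: "\<Union>Q = A" using Q(1) by (auto simp: partition_on_def)
      obtain C0 where C0: "C0 \<in> Q" "x0 \<in> C0" using x0 un by auto
      show "partition_on B (phi ` Q)"
      proof (rule partition_onI)
        show "\<Union> (phi ` Q) = B"
        proof
          show "\<Union> (phi ` Q) \<subseteq> B" using sub AB by (auto simp: phi_def)
          show "B \<subseteq> \<Union> (phi ` Q)"
          proof
            fix x assume "x \<in> B"
            show "x \<in> \<Union> (phi ` Q)"
            proof (cases "x \<in> A")
              case True
              then obtain C where "C \<in> Q" "x \<in> C" using un by auto
              then show ?thesis by (auto simp: phi_def)
            next
              case False
              then show ?thesis using C0 \<open>x \<in> B\<close> by (auto simp: phi_def)
            qed
          qed
        qed
        fix p q assume "p \<in> phi ` Q" "q \<in> phi ` Q" "p \<noteq> q"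
        then obtain C1 C2 where c: "C1 \<in> Q" "C2 \<in> Q" "p = phi C1" "q = phi C2" "C1 \<noteq> C2" by auto
        have "C1 \<inter> C2 = {}" using dj c by auto
        moreover have "C1 \<subseteq> A" "C2 \<subseteq> A" using sub c by auto
        ultimately show "disjnt p q" using c by (auto simp: phi_def disjnt_def)
      next
        show "{} \<notin> phi ` Q" using ne by (auto simp: phi_def)
      qed
      have "inj_on phi Q" by (rule inj_onI) (metis phiA sub)
      then show "card (phi ` Q) = card Q" by (rule card_image)
    qed
    show "finite {Q. partition_on B Q \<and> card Q = K}"
      using finitely_many_partition_on[of B] fin by (auto intro: finite_subset)
  qed
qed

lemma parts_le:
  fixes A B :: "'a set"
  assumes finA: "finite A" and finB: "finite B" and c: "card A \<le> card B" and K: "K \<ge> 1"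
  shows "card {Q. partition_on A Q \<and> card Q = K} \<le> card {Q. partition_on B Q \<and> card Q = K}"
proof (cases "A = {}")
  case True
  then have "{Q. partition_on A Q \<and> card Q = K} = {}" using K by (auto simp: partition_on_empty)
  then show ?thesis by (metis card.empty zero_le)
next
  case False
  obtain h where h: "h ` A \<subseteq> B" "inj_on h A" using card_le_inj[OF finA finB c] by auto
  obtain x where "x \<in> A" using False by auto
  have "card {Q. partition_on A Q \<and> card Q = K} \<le> card {Q. partition_on (h ` A) Q \<and> card Q = K}"
    by (rule parts_inj[OF h(2) finA])
  also have "\<dots> \<le> card {Q. partition_on B Q \<and> card Q = K}"
    by (rule parts_sub[OF h(1) finB]) (use \<open>x \<in> A\<close> in auto)
  finally show ?thesis .
qed



lemma Pi_nk_facts: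
  assumes "P \<in> Pi_nk n k"
  shows "partition_on {1..n} P" "card P = k" "finite P" "is_partition P" "\<Union>P = {1..n}"
    "\<And>B. B \<in> P \<Longrightarrow> finite B"
proof -
  show pp: "partition_on {1..n} P" "card P = k" using assms by (auto simp: Pi_nk_def)
  show fp: "finite P" using finite_elements[OF _ pp(1)] by simp
  show "is_partition P" using pp(1) fp by (auto simp: is_partition_def partition_on_def)
  show un: "\<Union>P = {1..n}" using pp(1) by (auto simp: partition_on_def)
  show "\<And>B. B \<in> P \<Longrightarrow> finite B" using un by (metis Union_upper finite_atLeastAtMost finite_subset)
qed

lemma count_lt:
  assumes m: "card S = m" "m < k"
  shows "card {P \<in> Pi_nk n k. S \<subseteq> P} \<le> S2 (n-m) (k-m)"
proof (cases "{P \<in> Pi_nk n k. S \<subseteq> P} = {}")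
  case True then show ?thesis by (metis card.empty zero_le)
next
  case False
  then obtain P0 where P0: "P0 \<in> Pi_nk n k" "S \<subseteq> P0" by auto
  note F0 = Pi_nk_facts[OF P0(1)]
  define R where "R = {1..n} - \<Union>S"
  have finS: "finite S" using F0(3) P0(2) finite_subset by blast
  have cU: "card (\<Union>S) = sum card S"
    by (rule card_Union_disjoint) (use F0 P0(2) in \<open>auto simp: partition_on_def intro: pairwise_subset\<close>)
  have "sum (\<lambda>_. 1::nat) S \<le> sum card S"
  proof (rule sum_mono)
    fix B assume "B \<in> S"
    then have "B \<in> P0" "B \<noteq> {}" using P0(2) F0(1) by (auto simp: partition_on_def)
    then show "1 \<le> card B" using F0(6) by (simp add: Suc_le_eq card_gt_0_iff)
  qed
  then have cU2: "m \<le> card (\<Union>S)" using cU m by simp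
  have US: "\<Union>S \<subseteq> {1..n}" using F0(5) P0(2) by auto
  have cR: "card R \<le> n - m" unfolding R_def using card_Diff_subset[OF finite_subset[OF US] US] cU2 by simp
  have "card {P \<in> Pi_nk n k. S \<subseteq> P} \<le> card {Q. partition_on R Q \<and> card Q = k - m}"
  proof (rule card_inj_on_le[where f="\<lambda>P. P - S"])
    show "inj_on (\<lambda>P. P - S) {P \<in> Pi_nk n k. S \<subseteq> P}"
      by (rule inj_onI) (metis (no_types, lifting) Diff_partition mem_Collect_eq)
    show "(\<lambda>P. P - S) ` {P \<in> Pi_nk n k. S \<subseteq> P} \<subseteq> {Q. partition_on R Q \<and> card Q = k - m}"
    proof safe
      fix P assume P: "P \<in> Pi_nk n k" "S \<subseteq> P"
      note FP = Pi_nk_facts[OF P(1)]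
      have dj: "\<And>B C. B \<in> P \<Longrightarrow> C \<in> P \<Longrightarrow> B \<noteq> C \<Longrightarrow> B \<inter> C = {}"
        using FP(1) by (auto simp: partition_on_def disjoint_def)
      show "card (P - S) = k - m" using card_Diff_subset[OF finS P(2)] FP(2) m by simp
      show "partition_on R (P - S)"
      proof (rule partition_onI)
        show "\<Union> (P - S) = R"
        proof
          show "\<Union> (P - S) \<subseteq> R"
          proof
            fix x assume "x \<in> \<Union> (P - S)"
            then obtain B where B: "B \<in> P" "B \<notin> S" "x \<in> B" by auto
            have "x \<notin> \<Union>S"
            proof
              assume "x \<in> \<Union>S"
              then obtain C where "C \<in> S" "x \<in> C" by auto
              then show False using dj[of B C] B P(2) by auto
            qed
            then show "x \<in> R" using B FP(5) unfolding R_def by auto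
          qed
          show "R \<subseteq> \<Union> (P - S)" unfolding R_def using FP(5) by auto
        qed
        show "\<And>p q. p \<in> P - S \<Longrightarrow> q \<in> P - S \<Longrightarrow> p \<noteq> q \<Longrightarrow> disjnt p q"
          using dj by (auto simp: disjnt_def)
        show "{} \<notin> P - S" using FP(1) by (auto simp: partition_on_def)
      qed
    qed
    show "finite {Q. partition_on R Q \<and> card Q = k - m}"
      using finitely_many_partition_on[of R] by (auto simp: R_def intro: finite_subset)
  qed
  also have "\<dots> \<le> card {Q. partition_on {1..n-m} Q \<and> card Q = k - m}"
    by (rule parts_le) (use cR m in \<open>auto simp: R_def\<close>)
  also have "\<dots> = S2 (n-m) (k-m)" by (simp add: S2_def Pi_nk_def)
  finally show ?thesis .
qed

lemma count_eq:
  assumes m: "card S = k" "1 \<le> k"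
  shows "card {P \<in> Pi_nk n k. S \<subseteq> P} \<le> 1"
proof -
  have "{P \<in> Pi_nk n k. S \<subseteq> P} \<subseteq> {S}"
  proof
    fix P assume "P \<in> {P \<in> Pi_nk n k. S \<subseteq> P}"
    then have P: "P \<in> Pi_nk n k" "S \<subseteq> P" by auto
    note FP = Pi_nk_facts[OF P(1)]
    show "P \<in> {S}" using card_subset_eq[OF FP(3) P(2)] FP(2) m by simp
  qed
  then show ?thesis by (metis card.empty card.insert card_mono empty_iff finite.emptyI finite.insertI
        One_nat_def)
qed



lemma sub_partition_is_partition:
  assumes "F \<in> Pi_nk n k" "S \<subseteq> F"
  shows "is_partition S" "\<Union>S \<subseteq> {1..n}" "finite S"
proof -
  note FF = Pi_nk_facts[OF assms(1)]
  show "finite S" using FF(3) assms(2) finite_subset by blast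
  then show "is_partition S" using FF(4) assms(2)
    by (auto simp: is_partition_def intro: pairwise_subset)
  show "\<Union>S \<subseteq> {1..n}" using FF(5) assms(2) by auto
qed

lemma tau_le:
  assumes "is_t_cover n t PP T"
  shows "tau n t PP \<le> card T"
  unfolding tau_def by (rule Least_le) (use assms in blast)

lemma tau_ex:
  assumes "is_t_cover n t PP T"
  shows "\<exists>T. is_t_cover n t PP T \<and> card T = tau n t PP"
  unfolding tau_def by (rule LeastI[of _ "card T"]) (use assms in blast)

lemma branch:
  assumes FF: "FF \<subseteq> Pi_nk n k" and GG: "GG \<subseteq> Pi_nk n l"
    and cr: "cross_t_intersecting t FF GG"
    and T: "is_t_cover n t FF T" "card T = p" and tl: "t \<le> l"
    and j: "t \<le> j" "j \<le> tau n t GG"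
  shows "\<exists>\<Lambda>. finite \<Lambda> \<and> card \<Lambda> \<le> (p choose t) * (l-t+1)^(j-t) \<and> (\<forall>S\<in>\<Lambda>. card S = j)
           \<and> (\<forall>F\<in>FF. \<exists>S\<in>\<Lambda>. S \<subseteq> F)"
  using j(1) j(2)
proof (induction j rule: dec_induct)
  case base
  have finT: "finite T" using T(1) by (auto simp: is_t_cover_def is_partition_def)
  define \<Lambda> where "\<Lambda> = {S. S \<subseteq> T \<and> card S = t}"
  have "finite \<Lambda>" unfolding \<Lambda>_def using finT by auto
  moreover have "card \<Lambda> = p choose t" unfolding \<Lambda>_def using n_subsets[OF finT] T(2) by simp
  moreover have "\<forall>F\<in>FF. \<exists>S\<in>\<Lambda>. S \<subseteq> F"
  proof
    fix F assume "F \<in> FF"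
    then have "t \<le> card (T \<inter> F)" using T(1) by (auto simp: is_t_cover_def)
    then obtain S where "S \<subseteq> T \<inter> F" "card S = t" by (meson obtain_subset_with_card_n)
    then show "\<exists>S\<in>\<Lambda>. S \<subseteq> F" unfolding \<Lambda>_def by auto
  qed
  ultimately show ?case unfolding \<Lambda>_def by auto
next
  case (step j)
  have jlt: "j < tau n t GG" using step.prems by simp
  have tj: "t \<le> j" using step.hyps by simp
  obtain \<Lambda> where L: "finite \<Lambda>" "card \<Lambda> \<le> (p choose t) * (l-t+1)^(j-t)"
    "\<forall>S\<in>\<Lambda>. card S = j" "\<forall>F\<in>FF. \<exists>S\<in>\<Lambda>. S \<subseteq> F"
    using step.IH[OF less_imp_le[OF jlt]] by blast
  define \<Lambda>0 where "\<Lambda>0 = {S\<in>\<Lambda>. \<exists>F\<in>FF. S \<subseteq> F}"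
  have nc: "\<exists>G\<in>GG. card (S \<inter> G) < t" if S0: "S \<in> \<Lambda>0" for S
  proof -
    obtain F where F: "F \<in> FF" "S \<subseteq> F" "S \<in> \<Lambda>" using S0 unfolding \<Lambda>0_def by auto
    have FP: "F \<in> Pi_nk n k" using F FF by auto
    have "\<not> is_t_cover n t GG S"
    proof
      assume "is_t_cover n t GG S"
      then have "tau n t GG \<le> card S" by (rule tau_le)
      then show False using L(3) F(3) jlt by auto
    qed
    then show ?thesis using sub_partition_is_partition[OF FP F(2)]
      by (auto simp: is_t_cover_def not_le)
  qed
  define GS where "GS = (\<lambda>S. SOME G. G \<in> GG \<and> card (S \<inter> G) < t)"
  have GS: "GS S \<in> GG" "card (S \<inter> GS S) < t" if "S \<in> \<Lambda>0" for S
  proof -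
    have "\<exists>G. G \<in> GG \<and> card (S \<inter> G) < t" using nc[OF that] by blast
    from someI_ex[OF this] show "GS S \<in> GG" "card (S \<inter> GS S) < t" unfolding GS_def by auto
  qed
  have finG: "finite (GS S)" "card (GS S) = l" if "S \<in> \<Lambda>0" for S
  proof -
    have "GS S \<in> Pi_nk n l" using GS(1)[OF that] GG by auto
    then show "finite (GS S)" "card (GS S) = l" using Pi_nk_facts(2,3) by blast+
  qed
  define e where "e = (\<lambda>S. SOME e. bij_betw e {0..<card (GS S - S)} (GS S - S))"
  have e: "bij_betw (e S) {0..<card (GS S - S)} (GS S - S)" if "S \<in> \<Lambda>0" for S
  proof -
    have "finite (GS S - S)" using finG(1)[OF that] by simp
    then have "\<exists>e. bij_betw e {0..<card (GS S - S)} (GS S - S)" by (rule ex_bij_betw_nat_finite)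
    then show ?thesis unfolding e_def by (rule someI_ex)
  qed
  define I where "I = (SIGMA S:\<Lambda>0. {i. i \<le> l-t \<and> i < card (GS S - S)})"
  define \<Lambda>' where "\<Lambda>' = (\<lambda>(S,i). insert (e S i) S) ` I"
  have IL: "I \<subseteq> \<Lambda> \<times> {..l-t}" unfolding I_def \<Lambda>0_def by auto
  have finI: "finite I" using finite_subset[OF IL] L(1) by simp
  have "card \<Lambda>' \<le> card I" unfolding \<Lambda>'_def by (rule card_image_le[OF finI])
  also have "\<dots> \<le> card (\<Lambda> \<times> {..l-t})" by (rule card_mono) (use IL L(1) in auto)
  also have "\<dots> = card \<Lambda> * (l-t+1)" by (simp add: card_cartesian_product)
  also have "\<dots> \<le> (p choose t) * (l-t+1)^(j-t) * (l-t+1)" using L(2) by (rule mult_right_mono) simp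
  also have "\<dots> = (p choose t) * (l-t+1)^(Suc j-t)" using tj
    by (simp add: Suc_diff_le algebra_simps)
  finally have cL: "card \<Lambda>' \<le> (p choose t) * (l-t+1)^(Suc j-t)" .
  have finL: "finite \<Lambda>'" unfolding \<Lambda>'_def using finI by simp
  have cardS: "\<forall>S\<in>\<Lambda>'. card S = Suc j"
  proof
    fix S' assume "S' \<in> \<Lambda>'"
    then obtain S i where Si: "S \<in> \<Lambda>0" "i < card (GS S - S)" "S' = insert (e S i) S"
      unfolding \<Lambda>'_def I_def by auto
    have "e S i \<in> GS S - S" using e[OF Si(1)] Si(2) by (auto simp: bij_betw_def)
    moreover obtain F where "F \<in> FF" "S \<subseteq> F" using Si(1) unfolding \<Lambda>0_def by auto
    moreover have "card S = j" using Si(1) L(3) unfolding \<Lambda>0_def by auto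
    moreover have "finite S" using sub_partition_is_partition(3)[of F n k S] FF calculation(2,3) by auto
    ultimately show "card S' = Suc j" using Si(3) by auto
  qed
  have cov: "\<forall>F\<in>FF. \<exists>S\<in>\<Lambda>'. S \<subseteq> F"
  proof
    fix F assume F: "F \<in> FF"
    then obtain S where S: "S \<in> \<Lambda>" "S \<subseteq> F" using L(4) by auto
    then have S0: "S \<in> \<Lambda>0" unfolding \<Lambda>0_def using F by auto
    define G where "G = GS S"
    define D where "D = G - S"
    define N where "N = card D"
    define s where "s = card (S \<inter> G)"
    have G: "G \<in> GG" "s < t" "finite G" "card G = l" using GS[OF S0] finG[OF S0]
      unfolding G_def s_def by auto
    have eb: "bij_betw (e S) {0..<N} D" using e[OF S0] unfolding N_def D_def G_def .
    have N: "N = l - s" unfolding N_def D_def s_def using card_Diff_subset_Int[of G S] G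
      by (simp add: Int_commute)
    have tFG: "t \<le> card (F \<inter> G)" using cr F G(1) by (auto simp: cross_t_intersecting_def)
    have "card (F \<inter> G) \<le> card ((F \<inter> D) \<union> (S \<inter> G))"
      by (rule card_mono) (use G(3) in \<open>auto simp: D_def\<close>)
    also have "\<dots> \<le> card (F \<inter> D) + s" unfolding s_def by (rule card_Un_le)
    finally have "card (F \<inter> G) \<le> card (F \<inter> D) + s" .
    then have cFD: "t \<le> card (F \<inter> D) + s" using tFG by simp
    define A where "A = {i\<in>{0..<N}. e S i \<in> F}"
    have "e S ` A = F \<inter> D" using eb unfolding A_def bij_betw_def by auto
    moreover have "inj_on (e S) A" using eb unfolding A_def bij_betw_def
      by (auto intro: inj_on_subset)
    ultimately have cA: "card A = card (F \<inter> D)" by (metis card_image)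
    have finA: "finite A" unfolding A_def by auto
    have "card A > 0" using cA cFD G(2) by linarith
    then have "A \<noteq> {}" by auto
    define i0 where "i0 = Min A"
    have i0A: "i0 \<in> A" unfolding i0_def using finA \<open>A \<noteq> {}\<close> by simp
    have "A \<subseteq> {i0..<N}" unfolding i0_def A_def using finA by auto
    then have "card A \<le> N - i0" by (metis card_atLeastLessThan card_mono finite_atLeastLessThan)
    moreover have "i0 < N" using i0A unfolding A_def by auto
    ultimately have "i0 \<le> l - t" using cA cFD N G(2) G(4) tl by linarith
    then have SI: "(S, i0) \<in> I" unfolding I_def using S0 \<open>i0 < N\<close> N_def D_def G_def by auto
    have sub: "insert (e S i0) S \<subseteq> F" using i0A S(2) unfolding A_def by auto
    have eq: "insert (e S i0) S = (\<lambda>(S,i). insert (e S i) S) (S,i0)" by simp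
    have "insert (e S i0) S \<in> \<Lambda>'" unfolding \<Lambda>'_def by (rule image_eqI[where f="\<lambda>(S,i). insert (e S i) S", OF eq SI])
    then show "\<exists>S\<in>\<Lambda>'. S \<subseteq> F" using sub by blast
  qed
  show ?case using finL cL cardS cov by blast
qed



lemma cross_sym: "cross_t_intersecting t F G \<Longrightarrow> cross_t_intersecting t G F"
  unfolding cross_t_intersecting_def by (metis Int_commute)

lemma member_cover:
  assumes "G0 \<in> Pi_nk n l" "cross_t_intersecting t FF GG" "G0 \<in> GG"
  shows "is_t_cover n t FF G0"
  using assms Pi_nk_facts(4,5)[OF assms(1)]
  unfolding is_t_cover_def cross_t_intersecting_def by (auto simp: Int_commute)

lemma side:
  assumes FF: "FF \<subseteq> Pi_nk n k" and GG: "GG \<subseteq> Pi_nk n l"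
    and cr: "cross_t_intersecting t FF GG" and ne: "FF \<noteq> {}" "GG \<noteq> {}"
    and tl: "t \<le> l" and k1: "1 \<le> k"
  shows "card FF \<le> (tau n t FF choose t) * ((l-t+1)^(tau n t GG - t) *
            (if tau n t GG \<le> k-1 then S2 (n - tau n t GG) (k - tau n t GG) else 1))"
    "t \<le> tau n t GG" "tau n t GG \<le> k"
proof -
  obtain F0 where F0: "F0 \<in> FF" using ne by auto
  obtain G0 where G0: "G0 \<in> GG" using ne by auto
  have cG0: "is_t_cover n t FF G0" using member_cover[of G0 n l t FF GG] G0 GG cr by auto
  have cF0: "is_t_cover n t GG F0" using member_cover[of F0 n k t GG FF] F0 FF cross_sym[OF cr] by auto
  obtain TF where TF: "is_t_cover n t FF TF" "card TF = tau n t FF" using tau_ex[OF cG0] by blast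
  obtain TG where TG: "is_t_cover n t GG TG" "card TG = tau n t GG" using tau_ex[OF cF0] by blast
  define m where "m = tau n t GG"
  have "tau n t GG \<le> card F0" by (rule tau_le[OF cF0])
  then show mk: "tau n t GG \<le> k" using Pi_nk_facts(2)[of F0 n k] F0 FF by auto
  have finTG: "finite TG" using TG(1) by (auto simp: is_t_cover_def is_partition_def)
  have "t \<le> card (TG \<inter> G0)" using TG(1) G0 by (auto simp: is_t_cover_def)
  also have "\<dots> \<le> card TG" by (rule card_mono[OF finTG]) auto
  finally show tm: "t \<le> tau n t GG" using TG(2) by simp
  obtain \<Lambda> where L: "finite \<Lambda>" "card \<Lambda> \<le> (tau n t FF choose t) * (l-t+1)^(m-t)"
    "\<forall>S\<in>\<Lambda>. card S = m" "\<forall>F\<in>FF. \<exists>S\<in>\<Lambda>. S \<subseteq> F"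
    using branch[OF FF GG cr TF tl, of m] tm unfolding m_def by auto
  define c where "c = (if m \<le> k-1 then S2 (n - m) (k - m) else 1)"
  have cS: "card {P \<in> Pi_nk n k. S \<subseteq> P} \<le> c" if "S \<in> \<Lambda>" for S
  proof (cases "m \<le> k-1")
    case True
    then show ?thesis using count_lt[of S m k n] L(3) that k1 unfolding c_def by auto
  next
    case False
    then have "m = k" using mk k1 unfolding m_def by auto
    then show ?thesis using count_eq[of S k n] L(3) that k1 False unfolding c_def by auto
  qed
  have finPi: "finite (Pi_nk n k)"
    by (rule finite_subset[of _ "Pow (Pow {1..n})"]) (auto simp: Pi_nk_def partition_on_def)
  have "FF \<subseteq> (\<Union>S\<in>\<Lambda>. {P \<in> Pi_nk n k. S \<subseteq> P})" using L(4) FF by blast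
  then have "card FF \<le> card (\<Union>S\<in>\<Lambda>. {P \<in> Pi_nk n k. S \<subseteq> P})"
    by (rule card_mono[rotated]) (use finPi L(1) in auto)
  also have "\<dots> \<le> (\<Sum>S\<in>\<Lambda>. card {P \<in> Pi_nk n k. S \<subseteq> P})" by (rule card_UN_le[OF L(1)])
  also have "\<dots> \<le> card \<Lambda> * c" using sum_bounded_above[of \<Lambda> "\<lambda>S. card {P \<in> Pi_nk n k. S \<subseteq> P}" c] cS
    by simp
  also have "\<dots> \<le> (tau n t FF choose t) * (l-t+1)^(m-t) * c" using L(2) by (rule mult_right_mono) simp
  finally show "card FF \<le> (tau n t FF choose t) * ((l-t+1)^(tau n t GG - t) *
            (if tau n t GG \<le> k-1 then S2 (n - tau n t GG) (k - tau n t GG) else 1))"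
    unfolding c_def m_def by (simp add: mult.assoc)
qed

lemma f_bound_eq:
  assumes "m \<le> k" "1 \<le> k"
  shows "f_bound m k l t n = (l-t+1)^(m-t) * (m choose t) * (if m \<le> k-1 then S2 (n - m) (k - m) else 1)"
proof (cases "m \<le> k-1")
  case True then show ?thesis by (simp add: f_bound_def)
next
  case False then have "m = k" using assms by auto
  then show ?thesis using False by (simp add: f_bound_def)
qed

theorem mainTheorem10:
  fixes n k l t :: nat and F G :: "nat set set set"
  assumes "k \<ge> t + 2" and "l \<ge> t + 2"
    and "real n \<ge> L (max k l) t"
    and "F \<subseteq> Pi_nk n k" and "G \<subseteq> Pi_nk n l"
    and "F \<noteq> {}" and "G \<noteq> {}"
    and "cross_t_intersecting t F G"
  shows "card F * card G \<le> g_bound (tau n t G) k l t n * g_bound (tau n t F) l k t n"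
proof -
  define m where "m = tau n t G"
  define p where "p = tau n t F"
  define c where "c = (if m \<le> k-1 then S2 (n - m) (k - m) else 1)"
  define c' where "c' = (if p \<le> l-1 then S2 (n - p) (l - p) else 1)"
  have k1: "1 \<le> k" "t \<le> k" "1 \<le> l" "t \<le> l" using assms(1,2) by auto
  note s1 = side[OF assms(4,5,8,6,7) k1(4) k1(1)]
  note s2 = side[OF assms(5,4) cross_sym[OF assms(8)] assms(7,6) k1(2) k1(3)]
  have A: "card F \<le> (p choose t) * ((l-t+1)^(m-t) * c)" using s1(1) unfolding m_def p_def c_def .
  have B: "card G \<le> (m choose t) * ((k-t+1)^(p-t) * c')" using s2(1) unfolding m_def p_def c'_def .
  have "card F * card G \<le> ((p choose t) * ((l-t+1)^(m-t) * c)) * ((m choose t) * ((k-t+1)^(p-t) * c'))"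
    using mult_le_mono[OF A B] .
  also have "\<dots> = ((l-t+1)^(m-t) * (m choose t) * c) * ((k-t+1)^(p-t) * (p choose t) * c')"
    by (simp add: mult_ac)
  also have "\<dots> = f_bound m k l t n * f_bound p l k t n"
    using f_bound_eq[of m k l t n] f_bound_eq[of p l k t n] s1(3) s2(3) k1
    unfolding m_def p_def c_def c'_def by simp
  also have "\<dots> \<le> g_bound m k l t n * g_bound p l k t n"
    unfolding g_bound_def by (intro mult_le_mono) auto
  finally show ?thesis unfolding m_def p_def .
qed

end
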